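(* Let $\mathcal{A}=\{A_1,\dots,A_m\}$ be a bimodal collection of pairwise disjoint nonempty subsets of a finite abelian group $G$, with internal difference groups $H_1,\dots,H_m$, labelled so that $|A_i|<|H_i|$ exactly for $i=1,\dots,r$, and suppose $r\ge 2$. For each $i$ let $a_i+H_i$ denote the coset of $H_i$ containing $A_i$. Then there exists a nonempty subset $D\subseteq G$ such that: (1) $a_i+H_i=A_i\sqcup D$ (disjoint union) for every $i\le r$; (2) $(a_i+H_i)\cap(a_j+H_j)=D$ for all distinct $i,j\in\{1,\dots,r\}$; (3) $D$ is a coset of a subgroup of $G$.
   Context: $G$ is written additively. The internal difference group $H_i$ of $A_i$ is the subgroup generated by all $x-y$ with $x,y\in A_i$; $A_i$ lies in a single coset of $H_i$ and $|A_i|\le|H_i|$. A collection $\{A_1,\dots,A_m\}$ of pairwise disjoint subsets of $G$ is bimodal if for every $i$ and every $\delta\in G\setminus\{0\}$, the number $N_i(\delta)$ of pairs $(a,b)$ with $a\in A_i$, $b\in A_j$ for some $j\neq i$, and $a-b=\delta$, satisfies $N_i(\delta)\in\{0,|A_i|\}$. *)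

theory Defs
  imports Main
begin

definition add_subgroup :: "'a::ab_group_add set \<Rightarrow> bool" where
  "add_subgroup H \<longleftrightarrow> 0 \<in> H \<and> (\<forall>x\<in>H. \<forall>y\<in>H. x + y \<in> H \<and> - x \<in> H)"

definition diff_group :: "'a::ab_group_add set \<Rightarrow> 'a set" where
  "diff_group A = \<Inter>{H. add_subgroup H \<and> {x - y | x y. x \<in> A \<and> y \<in> A} \<subseteq> H}"

definition coset_add :: "'a::ab_group_add \<Rightarrow> 'a set \<Rightarrow> 'a set" where
  "coset_add x H = (\<lambda>h. x + h) ` H"

definition N_count :: "(nat \<Rightarrow> 'a::ab_group_add set) \<Rightarrow> nat \<Rightarrow> nat \<Rightarrow> 'a \<Rightarrow> nat" where
  "N_count A m i \<delta> = card {(a, b). a \<in> A i \<and> (\<exists>j\<in>{1..m}. j \<noteq> i \<and> b \<in> A j) \<and> a - b = \<delta>}"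

definition bimodal :: "(nat \<Rightarrow> 'a::ab_group_add set) \<Rightarrow> nat \<Rightarrow> bool" where
  "bimodal A m \<longleftrightarrow>
     (\<forall>i\<in>{1..m}. \<forall>j\<in>{1..m}. i \<noteq> j \<longrightarrow> A i \<inter> A j = {}) \<and>
     (\<forall>i\<in>{1..m}. \<forall>\<delta>. \<delta> \<noteq> 0 \<longrightarrow> N_count A m i \<delta> = 0 \<or> N_count A m i \<delta> = card (A i))"

end

theory Submission
  imports Defs
begin

lemma diff_group_sub: "add_subgroup (diff_group A)"
  by (auto simp: add_subgroup_def diff_group_def)

lemma diff_in: "x \<in> A \<Longrightarrow> y \<in> A \<Longrightarrow> x - y \<in> diff_group A"
  by (auto simp: diff_group_def)

lemma diff_group_least:
  "add_subgroup K \<Longrightarrow> (\<And>x y. x \<in> A \<Longrightarrow> y \<in> A \<Longrightarrow> x - y \<in> K) \<Longrightarrow> diff_group A \<subseteq> K"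
  by (auto simp: diff_group_def)

lemma sg_add: "add_subgroup H \<Longrightarrow> x \<in> H \<Longrightarrow> y \<in> H \<Longrightarrow> x + y \<in> H"
  by (auto simp: add_subgroup_def)

lemma sg_neg: "add_subgroup H \<Longrightarrow> x \<in> H \<Longrightarrow> - x \<in> H"
  by (auto simp: add_subgroup_def)

lemma sg_diff: "add_subgroup H \<Longrightarrow> x \<in> H \<Longrightarrow> y \<in> H \<Longrightarrow> x - y \<in> H"
  by (metis diff_conv_add_uminus sg_add sg_neg)

lemma sg_inter: "add_subgroup H \<Longrightarrow> add_subgroup K \<Longrightarrow> add_subgroup (H \<inter> K)"
  unfolding add_subgroup_def by blast

lemma coset_mem: "y \<in> coset_add a H \<longleftrightarrow> y - a \<in> H"
  unfolding coset_add_def by (auto intro: image_eqI[where x="y - a"])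

lemma coset_eq:
  assumes "add_subgroup H" "x \<in> coset_add a H"
  shows "coset_add x H = coset_add a H"
proof -
  have xa: "x - a \<in> H" using assms(2) coset_mem by blast
  have "y - x \<in> H \<longleftrightarrow> y - a \<in> H" for y
  proof
    assume "y - x \<in> H"
    then have "(y - x) + (x - a) \<in> H" using sg_add[OF assms(1)] xa by blast
    then show "y - a \<in> H" by simp
  next
    assume "y - a \<in> H"
    then have "(y - a) - (x - a) \<in> H" using sg_diff[OF assms(1)] xa by blast
    then show "y - x \<in> H" by simp
  qed
  then show ?thesis using coset_mem by blast
qed

lemma card_coset: "card (coset_add a H) = card H"
  unfolding coset_add_def by (simp add: card_image inj_on_def)

lemma sub_P:
  fixes B :: "'a::{ab_group_add,finite} set"
  shows "add_subgroup {g. \<forall>x\<in>B. x + g \<in> B}"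
proof -
  have neg: "\<forall>x\<in>B. x + - g \<in> B" if g: "\<forall>x\<in>B. x + g \<in> B" for g
  proof
    fix x assume x: "x \<in> B"
    have "(\<lambda>y. y + g) ` B \<subseteq> B" using g by auto
    moreover have "card ((\<lambda>y. y + g) ` B) = card B" by (simp add: card_image inj_on_def)
    ultimately have "(\<lambda>y. y + g) ` B = B" by (simp add: card_subset_eq)
    with x obtain y where "y \<in> B" "x = y + g" by (metis imageE)
    then show "x + - g \<in> B" by simp
  qed
  show ?thesis unfolding add_subgroup_def using neg
    by (auto simp flip: add.assoc)
qed

lemma key:
  fixes A :: "nat \<Rightarrow> 'a::{ab_group_add, finite} set"
  assumes bim: "bimodal A m" and i: "i \<in> {1..m}" and a: "a \<in> A i" and a': "a' \<in> A i"
    and b: "b \<in> {x. \<exists>j\<in>{1..m}. j \<noteq> i \<and> x \<in> A j}"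
  shows "b + (a - a') \<in> {x. \<exists>j\<in>{1..m}. j \<noteq> i \<and> x \<in> A j}"
proof -
  let ?Bo = "{x. \<exists>j\<in>{1..m}. j \<noteq> i \<and> x \<in> A j}"
  define \<delta> where "\<delta> = a' - b"
  obtain j where j: "j \<in> {1..m}" "j \<noteq> i" "b \<in> A j" using b by auto
  have "A i \<inter> A j = {}" using bim i j unfolding bimodal_def by blast
  then have "a' \<noteq> b" using a' j by auto
  then have d0: "\<delta> \<noteq> 0" unfolding \<delta>_def by simp
  define S where "S = {(x, y). x \<in> A i \<and> (\<exists>j\<in>{1..m}. j \<noteq> i \<and> y \<in> A j) \<and> x - y = \<delta>}"
  have N: "N_count A m i \<delta> = card S" unfolding N_count_def S_def by simp
  have inS: "(a', b) \<in> S" unfolding S_def \<delta>_def using a' j by auto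
  have fS: "finite S" by simp
  have "card S \<noteq> 0" using inS fS by auto
  then have cS: "card S = card (A i)" using bim i d0 N unfolding bimodal_def by metis
  have inj: "inj_on fst S" unfolding inj_on_def S_def by auto
  have sub: "fst ` S \<subseteq> A i" unfolding S_def by auto
  have "card (fst ` S) = card (A i)" using card_image[OF inj] cS by simp
  then have "fst ` S = A i" using sub by (simp add: card_subset_eq)
  with a obtain y where "(a, y) \<in> S" by force
  then have "y \<in> ?Bo" "a - y = \<delta>" unfolding S_def by auto
  moreover have "y = b + (a - a')" using \<open>a - y = \<delta>\<close> unfolding \<delta>_def
    by (metis add.commute diff_add_cancel diff_diff_eq2 eq_diff_eq)
  ultimately show ?thesis by simp
qed

lemma periodic:
  fixes A :: "nat \<Rightarrow> 'a::{ab_group_add, finite} set"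
  assumes bim: "bimodal A m" and i: "i \<in> {1..m}"
    and x: "x \<in> {x. \<exists>j\<in>{1..m}. j \<noteq> i \<and> x \<in> A j}" and h: "h \<in> diff_group (A i)"
  shows "x + h \<in> {x. \<exists>j\<in>{1..m}. j \<noteq> i \<and> x \<in> A j}"
proof -
  let ?Bo = "{x. \<exists>j\<in>{1..m}. j \<noteq> i \<and> x \<in> A j}"
  have "diff_group (A i) \<subseteq> {g. \<forall>x\<in>?Bo. x + g \<in> ?Bo}"
    apply (rule diff_group_least[OF sub_P])
    using key[OF bim i] by blast
  then show ?thesis using x h by blast
qed

theorem proposition3p4:
  fixes A :: "nat \<Rightarrow> 'a::{ab_group_add, finite} set" and m r :: nat
  assumes bim: "bimodal A m"
    and nonempty: "\<forall>i\<in>{1..m}. A i \<noteq> {}"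
    and rm: "r \<le> m"
    and small: "\<forall>i\<in>{1..m}. card (A i) < card (diff_group (A i)) \<longleftrightarrow> i \<le> r"
    and r2: "r \<ge> 2"
  shows "\<exists>D. D \<noteq> {} \<and>
     (\<forall>i\<in>{1..r}. \<forall>a\<in>A i. coset_add a (diff_group (A i)) = A i \<union> D \<and> A i \<inter> D = {}) \<and>
     (\<forall>i\<in>{1..r}. \<forall>j\<in>{1..r}. i \<noteq> j \<longrightarrow> (\<forall>a\<in>A i. \<forall>b\<in>A j.
        coset_add a (diff_group (A i)) \<inter> coset_add b (diff_group (A j)) = D)) \<and>
     (\<exists>K x. add_subgroup K \<and> D = coset_add x K)"
proof -
  define H where "H i = diff_group (A i)" for i
  define Bo where "Bo i = {x. \<exists>j\<in>{1..m}. j \<noteq> i \<and> x \<in> A j}" for i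
  define U where "U = {x. \<exists>j\<in>{1..m}. x \<in> A j}"
  define Dd where "Dd i a = coset_add a (H i) - A i" for i a
  have sgH: "add_subgroup (H i)" for i unfolding H_def by (rule diff_group_sub)
  have disj: "\<And>i j. i \<in> {1..m} \<Longrightarrow> j \<in> {1..m} \<Longrightarrow> i \<noteq> j \<Longrightarrow> A i \<inter> A j = {}"
    using bim unfolding bimodal_def by blast
  have per: "\<And>i x h. i \<in> {1..m} \<Longrightarrow> x \<in> Bo i \<Longrightarrow> h \<in> H i \<Longrightarrow> x + h \<in> Bo i"
    unfolding Bo_def H_def using periodic[OF bim] by blast
  have BoU: "Bo i \<subseteq> U" for i unfolding Bo_def U_def by auto
  have AU: "i \<in> {1..m} \<Longrightarrow> A i \<subseteq> U" for i unfolding U_def by auto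
  have AB: "i \<in> {1..m} \<Longrightarrow> j \<noteq> i \<Longrightarrow> A i \<subseteq> Bo j" for i j unfolding Bo_def by auto
  have UAB: "x \<in> U \<Longrightarrow> x \<notin> A i \<Longrightarrow> x \<in> Bo i" for x i unfolding U_def Bo_def by auto
  have ABd: "i \<in> {1..m} \<Longrightarrow> A i \<inter> Bo i = {}" for i unfolding Bo_def using disj by blast
  have subc: "A i \<subseteq> coset_add a (H i)" if "a \<in> A i" for i a
    using that coset_mem diff_in unfolding H_def by blast
  have cdisj: "coset_add a (H i) \<inter> Bo i = {}" if i: "i \<in> {1..m}" and a: "a \<in> A i" for i a
  proof (rule ccontr)
    assume "coset_add a (H i) \<inter> Bo i \<noteq> {}"
    then obtain z where z: "z \<in> coset_add a (H i)" "z \<in> Bo i" by blast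
    then have "z - a \<in> H i" using coset_mem by blast
    then have "- (z - a) \<in> H i" using sgH sg_neg by blast
    then have "z + - (z - a) \<in> Bo i" using per[OF i z(2)] by blast
    then have "a \<in> Bo i" by simp
    then show False using ABd[OF i] a by blast
  qed
  have DdU: "z \<notin> U" if i: "i \<in> {1..m}" and a: "a \<in> A i" and z: "z \<in> Dd i a" for i a z
    using cdisj[OF i a] z UAB unfolding Dd_def by blast
  have Ddne: "Dd i a \<noteq> {}" if i: "i \<in> {1..r}" and a: "a \<in> A i" for i a
  proof
    assume "Dd i a = {}"
    then have "coset_add a (H i) \<subseteq> A i" unfolding Dd_def by blast
    then have "card (H i) \<le> card (A i)" using card_coset[of a "H i"] card_mono[of "A i" "coset_add a (H i)"] by simp
    moreover have "card (A i) < card (H i)" using small i rm unfolding H_def by auto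
    ultimately show False by simp
  qed
  have Ddind: "Dd i a = Dd i a'" if "a \<in> A i" "a' \<in> A i" for i a a'
    using coset_eq[OF sgH] subc that unfolding Dd_def by blast
  have claim: "Dd i a \<subseteq> coset_add b (H j)"
    if i: "i \<in> {1..r}" and j: "j \<in> {1..r}" and ij: "i \<noteq> j" and a: "a \<in> A i" and b: "b \<in> A j"
    for i j a b
  proof
    fix d assume d: "d \<in> Dd i a"
    show "d \<in> coset_add b (H j)"
    proof (rule ccontr)
      assume nd: "d \<notin> coset_add b (H j)"
      have im: "i \<in> {1..m}" and jm: "j \<in> {1..m}" using i j rm by auto
      have dU: "d \<notin> U" using DdU[OF im a d] .
      have h0: "d - a \<in> H i" using d unfolding Dd_def using coset_mem by blast
      have i1: "d + h \<notin> U" if h: "h \<in> H j" for h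
      proof
        assume "d + h \<in> U"
        show False
        proof (cases "d + h \<in> A j")
          case True
          then have "d + h - b \<in> H j" using subc[OF b] coset_mem by blast
          then have "(d + h - b) - h \<in> H j" using sg_diff[OF sgH] h by blast
          then show False using nd coset_mem by (auto simp: algebra_simps)
        next
          case False
          then have "d + h \<in> Bo j" using UAB \<open>d + h \<in> U\<close> by blast
          moreover have "- h \<in> H j" using sg_neg[OF sgH h] .
          ultimately have "d + h + - h \<in> Bo j" using per[OF jm] by blast
          then show False using dU BoU by auto
        qed
      qed
      have i2: "a + h \<in> A i" if h: "h \<in> H j" for h
      proof (rule ccontr)
        assume n: "a + h \<notin> A i"
        have "a \<in> Bo j" using AB[OF im ij[symmetric]] a by blast
        then have "a + h \<in> Bo j" using per[OF jm _ h] by blast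
        then have "a + h \<in> Bo i" using n UAB BoU by blast
        then have "a + h + (d - a) \<in> Bo i" using per[OF im _ h0] by blast
        then have "d + h \<in> U" using BoU by (auto simp: algebra_simps)
        then show False using i1 h by blast
      qed
      have i3: "H j \<subseteq> H i"
      proof
        fix h assume h: "h \<in> H j"
        have "(a + h) - a \<in> H i" unfolding H_def using diff_in i2[OF h] a by blast
        then show "h \<in> H i" by simp
      qed
      obtain d' where d': "d' \<in> Dd j b" using Ddne[OF j b] by blast
      have "d' - b \<in> H j" using d' unfolding Dd_def using coset_mem by blast
      then have "d' - b \<in> H i" using i3 by blast
      moreover have "b \<in> Bo i" using AB[OF jm ij] b by blast
      ultimately have "b + (d' - b) \<in> Bo i" using per[OF im] by blast
      then have "d' \<in> U" using BoU by auto
      then show False using DdU[OF jm b d'] by blast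
    qed
  qed
  have DdD: "Dd i a = Dd j b"
    if i: "i \<in> {1..r}" and j: "j \<in> {1..r}" and ij: "i \<noteq> j" and a: "a \<in> A i" and b: "b \<in> A j"
    for i j a b
  proof -
    have im: "i \<in> {1..m}" and jm: "j \<in> {1..m}" using i j rm by auto
    have "Dd i a \<subseteq> Dd j b"
      using claim[OF i j ij a b] DdU[OF im a] AU[OF jm] unfolding Dd_def by blast
    moreover have "Dd j b \<subseteq> Dd i a"
      using claim[OF j i ij[symmetric] b a] DdU[OF jm b] AU[OF im] unfolding Dd_def by blast
    ultimately show ?thesis by blast
  qed
  have r1: "1 \<in> {1..r}" and r2': "2 \<in> {1..r}" using r2 by auto
  have m1: "1 \<in> {1..m}" and m2: "2 \<in> {1..m}" using r2 rm by auto
  obtain a1 where a1: "a1 \<in> A 1" using nonempty m1 by blast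
  obtain b2 where b2: "b2 \<in> A 2" using nonempty m2 by blast
  define D where "D = Dd 1 a1"
  have allD: "Dd i a = D" if i: "i \<in> {1..r}" and a: "a \<in> A i" for i a
  proof (cases "i = 1")
    case True then show ?thesis unfolding D_def using Ddind a a1 by blast
  next
    case False then show ?thesis unfolding D_def using DdD[OF i r1 False a a1] by simp
  qed
  have cos: "coset_add a (H i) = A i \<union> D \<and> A i \<inter> D = {}" if i: "i \<in> {1..r}" and a: "a \<in> A i" for i a
    using allD[OF i a] subc[OF a] unfolding Dd_def by blast
  have P1: "D \<noteq> {}" using Ddne[OF r1 a1] unfolding D_def .
  have P2: "coset_add a (H i) \<inter> coset_add b (H j) = D"
    if i: "i \<in> {1..r}" and j: "j \<in> {1..r}" and ij: "i \<noteq> j" and a: "a \<in> A i" and b: "b \<in> A j"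
    for i j a b
  proof -
    have "A i \<inter> A j = {}" using disj i j ij rm by auto
    then show ?thesis using cos[OF i a] cos[OF j b] by blast
  qed
  have P3: "\<exists>K x. add_subgroup K \<and> D = coset_add x K"
  proof -
    obtain x where x: "x \<in> D" using P1 by blast
    have DD: "D = coset_add a1 (H 1) \<inter> coset_add b2 (H 2)" using P2[OF r1 r2' _ a1 b2] by simp
    have x1: "x \<in> coset_add a1 (H 1)" and x2: "x \<in> coset_add b2 (H 2)" using DD x by auto
    have e1: "coset_add a1 (H 1) = coset_add x (H 1)" using coset_eq[OF sgH x1] by simp
    have e2: "coset_add b2 (H 2) = coset_add x (H 2)" using coset_eq[OF sgH x2] by simp
    have "D = coset_add x (H 1 \<inter> H 2)" unfolding DD e1 e2 by (auto simp: coset_mem)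
    moreover have "add_subgroup (H 1 \<inter> H 2)" using sg_inter[OF sgH sgH] .
    ultimately show ?thesis by blast
  qed
  have Q1: "\<forall>i\<in>{1..r}. \<forall>a\<in>A i. coset_add a (diff_group (A i)) = A i \<union> D \<and> A i \<inter> D = {}"
    using cos unfolding H_def by blast
  have Q2: "\<forall>i\<in>{1..r}. \<forall>j\<in>{1..r}. i \<noteq> j \<longrightarrow> (\<forall>a\<in>A i. \<forall>b\<in>A j.
        coset_add a (diff_group (A i)) \<inter> coset_add b (diff_group (A j)) = D)"
    using P2 unfolding H_def by blast
  show ?thesis by (rule exI[of _ D], intro conjI P1 Q1 Q2 P3)
qed

end
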